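(* Let $H$ be a finite simple graph and let $G$ be a graph obtained from $H$ by proliferating some of its leaves. If $I(H)^{[k]}$ has linear quotients, then $I(G)^{[k]}$ has linear quotients.
   Context: Graph vertices are identified with variables of a polynomial ring over a field $K$, edges with degree-2 monomials. $I(H)^{[k]}$ is the ideal generated by all products $e_1\cdots e_k$ over $k$-matchings of $H$. Proliferating a leaf: if $a$ is a leaf (vertex of degree 1) of a graph with unique neighbour $b$, one adds new vertices $a_1,\ldots,a_t$ and new edges $\{a_1,b\},\ldots,\{a_t,b\}$ (so the $a_i$ are leaves); "proliferating some leaves" means applying this operation to some leaves. A monomial ideal has linear quotients if its minimal generators can be ordered $u_1,\ldots,u_m$ so that $(u_1,\ldots,u_{j-1}):u_j$ is generated by variables for each $j=2,\ldots,m$. *)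

theory Defs
  imports "HOL-Library.Multiset"
begin

(* Monomials in the variables of type 'a are finite multisets of variables:
   product = (+), divisibility = (\<subseteq>#), the variable x is {#x#}.
   A monomial ideal of K[x] is determined by the set of monomials it contains. *)

type_synonym 'a monomial = "'a multiset"

definition mon_ideal :: "'a monomial set \<Rightarrow> 'a monomial set" where
  "mon_ideal S = {m. \<exists>s\<in>S. s \<subseteq># m}"

definition colon :: "'a monomial set \<Rightarrow> 'a monomial \<Rightarrow> 'a monomial set" where
  "colon I u = {m. m + u \<in> I}"

definition generated_by_variables :: "'a monomial set \<Rightarrow> bool" where
  "generated_by_variables I \<longleftrightarrow> (\<exists>X. I = mon_ideal ((\<lambda>x. {#x#}) ` X))"

definition min_gens :: "'a monomial set \<Rightarrow> 'a monomial set" where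
  "min_gens S = {g\<in>S. \<forall>h\<in>S. h \<subseteq># g \<longrightarrow> h = g}"

definition has_linear_quotients :: "'a monomial set \<Rightarrow> bool" where
  "has_linear_quotients S \<longleftrightarrow>
     (\<exists>us. distinct us \<and> set us = min_gens S \<and>
        (\<forall>j. 1 \<le> j \<and> j < length us \<longrightarrow>
            generated_by_variables (colon (mon_ideal (set (take j us))) (us ! j))))"

definition finite_simple_graph :: "'a set \<Rightarrow> 'a set set \<Rightarrow> bool" where
  "finite_simple_graph V E \<longleftrightarrow> finite V \<and> (\<forall>e\<in>E. e \<subseteq> V \<and> card e = 2)"

definition matching :: "'a set set \<Rightarrow> 'a set set \<Rightarrow> nat \<Rightarrow> bool" where
  "matching E M k \<longleftrightarrow> M \<subseteq> E \<and> card M = k \<and>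
     (\<forall>e\<in>M. \<forall>f\<in>M. e \<noteq> f \<longrightarrow> e \<inter> f = {})"

definition matching_monomial :: "'a set set \<Rightarrow> 'a monomial" where
  "matching_monomial M = (\<Sum>e\<in>M. mset_set e)"

definition matching_gens :: "'a set set \<Rightarrow> nat \<Rightarrow> 'a monomial set" where
  "matching_gens E k = matching_monomial ` {M. matching E M k}"

definition is_leaf :: "'a set \<Rightarrow> 'a set set \<Rightarrow> 'a \<Rightarrow> bool" where
  "is_leaf V E a \<longleftrightarrow> a \<in> V \<and> card {e\<in>E. a \<in> e} = 1"

definition proliferate_step :: "'a set \<times> 'a set set \<Rightarrow> 'a set \<times> 'a set set \<Rightarrow> bool" where
  "proliferate_step H G \<longleftrightarrow>
     (\<exists>a b N. is_leaf (fst H) (snd H) a \<and> {a, b} \<in> snd H \<and> finite N \<and> N \<inter> fst H = {} \<and>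
        G = (fst H \<union> N, snd H \<union> {{x, b} | x. x \<in> N}))"

definition obtained_by_proliferating :: "'a set \<times> 'a set set \<Rightarrow> 'a set \<times> 'a set set \<Rightarrow> bool" where
  "obtained_by_proliferating H G \<longleftrightarrow> proliferate_step\<^sup>*\<^sup>* H G"

end

theory Submission
  imports Defs
begin

definition LQ :: "'a monomial set \<Rightarrow> 'a monomial \<Rightarrow> bool" where
  "LQ P u \<longleftrightarrow> (\<forall>w\<in>P. \<exists>x. x \<in># w - u \<and> add_mset x u \<in> mon_ideal P)"

lemma gbv_iff: "generated_by_variables (colon (mon_ideal P) u) \<longleftrightarrow> LQ P u"
proof
  assume "generated_by_variables (colon (mon_ideal P) u)"
  then obtain X where C: "colon (mon_ideal P) u = mon_ideal ((\<lambda>x. {#x#}) ` X)"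
    unfolding generated_by_variables_def by blast
  show "LQ P u" unfolding LQ_def
  proof
    fix w assume w: "w \<in> P"
    have "w - u \<in> colon (mon_ideal P) u"
      unfolding colon_def mon_ideal_def using w
      by (auto intro!: bexI[of _ w] simp: subseteq_mset_def)
    then have "w - u \<in> mon_ideal ((\<lambda>x. {#x#}) ` X)" using C by simp
    then obtain x where x: "x \<in> X" "{#x#} \<subseteq># w - u" unfolding mon_ideal_def by blast
    have "{#x#} \<in> mon_ideal ((\<lambda>x. {#x#}) ` X)" unfolding mon_ideal_def using x by auto
    then have "{#x#} \<in> colon (mon_ideal P) u" using C by simp
    then have "add_mset x u \<in> mon_ideal P" unfolding colon_def by simp
    with x show "\<exists>x. x \<in># w - u \<and> add_mset x u \<in> mon_ideal P" by auto
  qed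
next
  assume L: "LQ P u"
  have "colon (mon_ideal P) u = mon_ideal ((\<lambda>x. {#x#}) ` {x. add_mset x u \<in> mon_ideal P})"
  proof (rule set_eqI, rule iffI)
    fix m assume "m \<in> colon (mon_ideal P) u"
    then obtain s where s: "s \<in> P" "s \<subseteq># m + u" unfolding colon_def mon_ideal_def by auto
    from L s(1) obtain x where x: "x \<in># s - u" "add_mset x u \<in> mon_ideal P" unfolding LQ_def by blast
    have "s - u \<subseteq># m" using s(2) by (simp add: subset_eq_diff_conv)
    then have "x \<in># m" using x(1) by (meson mset_subset_eqD)
    then show "m \<in> mon_ideal ((\<lambda>x. {#x#}) ` {x. add_mset x u \<in> mon_ideal P})"
    proof -
      have "{#x#} \<in> (\<lambda>x. {#x#}) ` {x. add_mset x u \<in> mon_ideal P}" using x(2) by blast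
      then show ?thesis unfolding mon_ideal_def[of "(\<lambda>x. {#x#}) ` _"] using \<open>x \<in># m\<close> by auto
    qed
  next
    fix m assume "m \<in> mon_ideal ((\<lambda>x. {#x#}) ` {x. add_mset x u \<in> mon_ideal P})"
    then obtain x where x: "add_mset x u \<in> mon_ideal P" "x \<in># m" unfolding mon_ideal_def by auto
    then obtain s where s: "s \<in> P" "s \<subseteq># add_mset x u" unfolding mon_ideal_def by auto
    have "add_mset x u \<subseteq># m + u" using x(2)
      by (simp add: subseteq_mset_def)
    then have "s \<subseteq># m + u" using s(2) by (rule subset_mset.order_trans[rotated])
    then have "m + u \<in> mon_ideal P" using s(1) unfolding mon_ideal_def by blast
    then show "m \<in> colon (mon_ideal P) u" unfolding colon_def by simp
  qed
  then show "generated_by_variables (colon (mon_ideal P) u)"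
    unfolding generated_by_variables_def by blast
qed

definition lq_list :: "'a monomial list \<Rightarrow> bool" where
  "lq_list L \<longleftrightarrow> (\<forall>j<length L. LQ (set (take j L)) (L ! j))"

lemma lq_snoc: "lq_list (L @ [v]) \<longleftrightarrow> lq_list L \<and> LQ (set L) v"
  unfolding lq_list_def
  by (auto simp: nth_append less_Suc_eq)

lemma lq_Nil: "lq_list []" by (simp add: lq_list_def)

lemma hlq_iff: "has_linear_quotients S \<longleftrightarrow> (\<exists>us. distinct us \<and> set us = min_gens S \<and> lq_list us)"
proof -
  have eq: "\<And>us. (\<forall>j. 1 \<le> j \<and> j < length us \<longrightarrow>
            generated_by_variables (colon (mon_ideal (set (take j us))) (us ! j))) \<longleftrightarrow> lq_list us"
    unfolding lq_list_def gbv_iff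
    by (metis LQ_def empty_iff less_one linorder_not_le list.set(1) take_0)
  then show ?thesis unfolding has_linear_quotients_def by (simp only: eq)
qed


definition sg :: "'a \<Rightarrow> 'a \<Rightarrow> 'a monomial \<Rightarrow> 'a monomial" where
  "sg a c u = add_mset c (u - {#a#})"

lemma mon_ideal_mono: "A \<subseteq> B \<Longrightarrow> mon_ideal A \<subseteq> mon_ideal B"
  unfolding mon_ideal_def by blast

lemma mon_idealI: "s \<in> P \<Longrightarrow> s \<subseteq># m \<Longrightarrow> m \<in> mon_ideal P"
  unfolding mon_ideal_def by blast

lemma count_sg: "a \<noteq> c \<Longrightarrow> count (sg a c u) y =
   (if y = c then Suc (count u c) else if y = a then count u a - 1 else count u y)"
  unfolding sg_def by auto

context
  fixes S :: "'a monomial set" and a c :: 'a and n :: nat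
  assumes ac: "a \<noteq> c" and c0: "\<forall>u\<in>S. count u c = 0" and a1: "\<forall>u\<in>S. count u a \<le> 1"
    and sz: "\<forall>u\<in>S. size u = n"
begin

lemma anti: "s \<in> S \<Longrightarrow> u \<in> S \<Longrightarrow> s \<subseteq># u \<Longrightarrow> s = u"
  using sz mset_subset_size by (metis less_irrefl subset_mset.le_imp_less_or_eq)

lemma core1:
  assumes Y: "Y \<subseteq> S" and u: "u \<in> S" "u \<notin> Y" and L: "LQ Y u"
  shows "LQ (Y \<union> sg a c ` (Y \<inter> {u. a \<in># u})) u"
  unfolding LQ_def
proof
  let ?Q = "Y \<union> sg a c ` (Y \<inter> {u. a \<in># u})"
  have mono: "mon_ideal Y \<subseteq> mon_ideal ?Q" by (rule mon_ideal_mono) blast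
  fix w assume "w \<in> ?Q"
  then consider "w \<in> Y" | u' where "u' \<in> Y" "a \<in># u'" "w = sg a c u'" by blast
  then show "\<exists>x. x \<in># w - u \<and> add_mset x u \<in> mon_ideal ?Q"
  proof cases
    case 1
    then show ?thesis using L mono unfolding LQ_def by blast
  next
    case 2
    from L 2(1) obtain x where x: "x \<in># u' - u" "add_mset x u \<in> mon_ideal Y"
      unfolding LQ_def by blast
    have u'S: "u' \<in> S" using 2 Y by blast
    show ?thesis
    proof (cases "x = a")
      case False
      have "x \<noteq> c" using x(1) c0 u'S by (metis count_eq_zero_iff in_diffD)
      then have "x \<in># w - u" using x(1) False ac 2(3)
        by (simp add: in_diff_count count_sg)
      then show ?thesis using x(2) mono by blast
    next
      case True
      have cu'a: "count u' a \<le> 1" using a1 u'S by blast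
      have "count u a < count u' a" using x(1) True by (simp add: in_diff_count)
      then have cua: "count u a = 0" using cu'a by linarith
      have "add_mset a u \<in> mon_ideal Y" using x(2) True by simp
      then obtain s where s: "s \<in> Y" "s \<subseteq># add_mset a u" unfolding mon_ideal_def by blast
      have sy: "count s y \<le> count (add_mset a u) y" for y
        using s(2) unfolding subseteq_mset_def by blast
      have as: "a \<in># s"
      proof (rule ccontr)
        assume na: "a \<notin># s"
        have "s \<subseteq># u" unfolding subseteq_mset_def
        proof
          fix y show "count s y \<le> count u y"
            using sy[of y] na by (cases "y = a") (auto simp: count_eq_zero_iff[symmetric])
        qed
        then have "s = u" using anti s(1) Y u by blast
        then show False using s(1) u by blast
      qed
      have sS: "s \<in> S" using s Y by blast
      have cs: "count s c = 0" using c0 sS by blast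
      have "sg a c s \<subseteq># add_mset c u"
        unfolding subseteq_mset_def
      proof
        fix y
        show "count (sg a c s) y \<le> count (add_mset c u) y"
        proof (cases "y = c")
          case True then show ?thesis using cs ac by (simp add: count_sg)
        next
          case False
          then show ?thesis using sy[of y] ac by (cases "y = a") (auto simp: count_sg)
        qed
      qed
      then have "add_mset c u \<in> mon_ideal ?Q"
        using s(1) as by (intro mon_idealI[of "sg a c s"]) auto
      moreover have "count u c = 0" using c0 u by blast
      then have "c \<in># w - u" using 2(3) ac by (simp add: in_diff_count count_sg)
      ultimately show ?thesis by blast
    qed
  qed
qed


lemma core2:
  assumes Y: "Y \<subseteq> S" and u: "u \<in> S" "u \<notin> Y" and L: "LQ Y u" and au: "a \<in># u"
  shows "LQ (Y \<union> sg a c ` (Y \<inter> {u. a \<in># u}) \<union> {u}) (sg a c u)"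
  unfolding LQ_def
proof
  let ?Q = "Y \<union> sg a c ` (Y \<inter> {u. a \<in># u}) \<union> {u}"
  let ?v = "sg a c u"
  have cuc: "count u c = 0" using c0 u by blast
  have cua: "count u a \<ge> 1" using au by (simp add: Suc_le_eq)
  have H1: "add_mset x ?v \<in> mon_ideal ?Q" if xu: "add_mset x u \<in> mon_ideal Y" for x
  proof -
    from xu obtain s where s: "s \<in> Y" "s \<subseteq># add_mset x u" unfolding mon_ideal_def by blast
    have sy: "count s y \<le> count (add_mset x u) y" for y
      using s(2) unfolding subseteq_mset_def by blast
    have cs: "count s c = 0" using c0 s(1) Y by blast
    show ?thesis
    proof (cases "a \<in># s")
      case True
      have "sg a c s \<subseteq># add_mset x ?v" unfolding subseteq_mset_def
      proof
        fix y
        show "count (sg a c s) y \<le> count (add_mset x ?v) y"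
        proof (cases "y = c")
          case True then show ?thesis using cs ac by (simp add: count_sg)
        next
          case False
          then show ?thesis using sy[of y] ac cua by (cases "y = a") (auto simp: count_sg)
        qed
      qed
      then show ?thesis using s(1) True by (intro mon_idealI[of "sg a c s"]) auto
    next
      case False
      have "s \<subseteq># add_mset x ?v" unfolding subseteq_mset_def
      proof
        fix y
        show "count s y \<le> count (add_mset x ?v) y"
        proof (cases "y = c")
          case True then show ?thesis using cs by simp
        next
          case nc: False
          show ?thesis
          proof (cases "y = a")
            case True then show ?thesis using False by (simp add: count_eq_zero_iff[symmetric])
          next
            case False then show ?thesis using sy[of y] nc ac by (auto simp: count_sg)
          qed
        qed
      qed
      then show ?thesis using s(1) by (intro mon_idealI[of s]) auto
    qed
  qed
  fix w assume "w \<in> ?Q"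
  then consider "w = u" | "w \<in> Y" | u' where "u' \<in> Y" "a \<in># u'" "w = sg a c u'" by blast
  then show "\<exists>x. x \<in># w - ?v \<and> add_mset x ?v \<in> mon_ideal ?Q"
  proof cases
    case 1
    have "a \<in># w - ?v" using 1 cua ac by (simp add: in_diff_count count_sg)
    moreover have "u \<subseteq># add_mset a ?v" unfolding subseteq_mset_def
    proof
      fix y show "count u y \<le> count (add_mset a ?v) y"
        using cuc ac cua by (auto simp: count_sg)
    qed
    then have "add_mset a ?v \<in> mon_ideal ?Q" by (intro mon_idealI[of u]) auto
    ultimately show ?thesis by blast
  next
    case 2
    from L 2 obtain x where x: "x \<in># w - u" "add_mset x u \<in> mon_ideal Y"
      unfolding LQ_def by blast
    have wS: "w \<in> S" using 2 Y by blast
    have cwa: "count w a \<le> 1" using a1 wS by blast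
    have xa: "x \<noteq> a"
    proof
      assume "x = a" then have "count u a < count w a" using x(1) by (simp add: in_diff_count)
      then show False using cwa cua by linarith
    qed
    have "count w c = 0" using c0 wS by blast
    then have xc: "x \<noteq> c" using x(1) by (auto simp: in_diff_count)
    have "x \<in># w - ?v" using x(1) xa xc ac by (simp add: in_diff_count count_sg)
    then show ?thesis using H1[OF x(2)] by blast
  next
    case 3
    from L 3(1) obtain x where x: "x \<in># u' - u" "add_mset x u \<in> mon_ideal Y"
      unfolding LQ_def by blast
    have wS: "u' \<in> S" using 3 Y by blast
    have cwa: "count u' a \<le> 1" using a1 wS by blast
    have xa: "x \<noteq> a"
    proof
      assume "x = a" then have "count u a < count u' a" using x(1) by (simp add: in_diff_count)
      then show False using cwa cua by linarith
    qed
    have "count u' c = 0" using c0 wS by blast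
    then have xc: "x \<noteq> c" using x(1) by (auto simp: in_diff_count)
    have "x \<in># w - ?v" using x(1) xa xc ac 3(3) by (simp add: in_diff_count count_sg)
    then show ?thesis using H1[OF x(2)] by blast
  qed
qed

definition ff :: "'a monomial \<Rightarrow> 'a monomial list" where
  "ff u = (if a \<in># u then [u, sg a c u] else [u])"

lemma sg_inj: "a \<in># u \<Longrightarrow> a \<in># u' \<Longrightarrow> sg a c u = sg a c u' \<Longrightarrow> u = u'"
  unfolding sg_def by (metis add_mset_remove_trivial insert_DiffM)

lemma main_list:
  "set us \<subseteq> S \<Longrightarrow> distinct us \<Longrightarrow> lq_list us \<Longrightarrow>
   lq_list (concat (map ff us)) \<and> distinct (concat (map ff us)) \<and>
   set (concat (map ff us)) = set us \<union> sg a c ` (set us \<inter> {u. a \<in># u})"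
proof (induction us rule: rev_induct)
  case Nil
  then show ?case by (simp add: lq_Nil)
next
  case (snoc u ys)
  have Y: "set ys \<subseteq> S" and uS: "u \<in> S" and uY: "u \<notin> set ys" and dys: "distinct ys"
    using snoc.prems by auto
  have lys: "lq_list ys" and Lu: "LQ (set ys) u" using snoc.prems(3) by (auto simp: lq_snoc)
  from snoc.IH[OF Y dys lys] have IH1: "lq_list (concat (map ff ys))"
    and IH2: "distinct (concat (map ff ys))"
    and IH3: "set (concat (map ff ys)) = set ys \<union> sg a c ` (set ys \<inter> {u. a \<in># u})" by auto
  have cu: "count u c = 0" using c0 uS by blast
  have csg: "count (sg a c v) c \<noteq> 0" for v by (simp add: sg_def)
  have nsg: "\<forall>v. u \<noteq> sg a c v" using cu csg by metis
  have u1: "u \<notin> set (concat (map ff ys))" unfolding IH3 using uY nsg by blast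
  show ?case
  proof (cases "a \<in># u")
    case True
    have ffu: "ff u = [u, sg a c u]" using True by (simp add: ff_def)
    have A: "concat (map ff (ys @ [u])) = (concat (map ff ys) @ [u]) @ [sg a c u]"
      using ffu by simp
    have "sg a c u \<notin> set ys" using Y c0 csg by (metis subsetD)
    moreover have "sg a c u \<notin> sg a c ` (set ys \<inter> {u. a \<in># u})"
      using sg_inj True uY by blast
    ultimately have u2: "sg a c u \<notin> set (concat (map ff ys))" using IH3 by blast
    have "u \<noteq> sg a c u" using cu csg by metis
    have l1: "lq_list (concat (map ff ys) @ [u])"
      using IH1 core1[OF Y uS uY Lu] IH3 by (simp add: lq_snoc)
    have l2: "lq_list ((concat (map ff ys) @ [u]) @ [sg a c u])"
      using l1 core2[OF Y uS uY Lu True] IH3 unfolding lq_snoc by (simp add: Un_ac insert_commute)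
    show ?thesis unfolding A using l2 IH2 IH3 u1 u2 \<open>u \<noteq> sg a c u\<close> True
      by auto
  next
    case False
    have A: "concat (map ff (ys @ [u])) = concat (map ff ys) @ [u]"
      using False by (simp add: ff_def)
    show ?thesis unfolding A using IH1 IH2 IH3 u1 core1[OF Y uS uY Lu] False
      by (auto simp: lq_snoc)
  qed
qed

end

lemma min_gens_same_size: "\<forall>u\<in>X. size u = n \<Longrightarrow> min_gens X = X"
  unfolding min_gens_def
  by (auto dest: mset_subset_size simp: subset_mset.le_less)

lemma size_sg: "a \<in># u \<Longrightarrow> size (sg a c u) = size u"
  by (metis insert_DiffM size_add_mset sg_def)

lemma abstract_main:
  assumes ac: "a \<noteq> c" and c0: "\<forall>u\<in>S. count u c = 0" and a1: "\<forall>u\<in>S. count u a \<le> 1"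
    and sz: "\<forall>u\<in>S. size u = n" and H: "has_linear_quotients S"
  shows "has_linear_quotients (S \<union> sg a c ` (S \<inter> {u. a \<in># u}))"
proof -
  from H obtain us where us: "distinct us" "set us = S" "lq_list us"
    unfolding hlq_iff using min_gens_same_size[OF sz] by auto
  note M = main_list[OF ac c0 a1 sz, of us] 
  have sz2: "\<forall>u\<in>S \<union> sg a c ` (S \<inter> {u. a \<in># u}). size u = n"
    using sz by (auto simp: size_sg)
  show ?thesis unfolding hlq_iff min_gens_same_size[OF sz2]
    using M us by blast
qed


lemma mm_insert: "finite M \<Longrightarrow> e \<notin> M \<Longrightarrow>
  matching_monomial (insert e M) = mset_set e + matching_monomial M"
  unfolding matching_monomial_def by simp

lemma mm_mem: "finite M \<Longrightarrow> \<forall>e\<in>M. finite e \<Longrightarrow> x \<in># matching_monomial M \<longleftrightarrow> (\<exists>e\<in>M. x \<in> e)"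
  unfolding matching_monomial_def by (simp add: set_mset_sum)

lemma mm_size: "finite M \<Longrightarrow> \<forall>e\<in>M. finite e \<Longrightarrow> size (matching_monomial M) = (\<Sum>e\<in>M. card e)"
  by (induction M rule: finite_induct) (auto simp: mm_insert matching_monomial_def)

lemma mm_count_le1:
  assumes fin: "finite M" "\<forall>e\<in>M. finite e" and disj: "\<forall>e\<in>M. \<forall>f\<in>M. e \<noteq> f \<longrightarrow> e \<inter> f = {}"
  shows "count (matching_monomial M) x \<le> 1"
proof (cases "\<exists>e\<in>M. x \<in> e")
  case True
  then obtain e0 where e0: "e0 \<in> M" "x \<in> e0" by blast
  have M: "M = insert e0 (M - {e0})" using e0 by blast
  have "x \<notin># matching_monomial (M - {e0})"
    using fin disj e0 by (subst mm_mem) auto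
  then have "count (matching_monomial (M - {e0})) x = 0" by (simp add: count_eq_zero_iff)
  moreover have "matching_monomial M = mset_set e0 + matching_monomial (M - {e0})"
    using M fin mm_insert[of "M - {e0}" e0] by simp
  ultimately show ?thesis using fin e0 by simp
next
  case False
  then have "x \<notin># matching_monomial M" using fin by (subst mm_mem) auto
  then show ?thesis by (simp add: not_in_iff)
qed

lemma fsg_finite: "finite_simple_graph V E \<Longrightarrow> finite E \<and> (\<forall>e\<in>E. finite e \<and> card e = 2 \<and> e \<subseteq> V)"
  unfolding finite_simple_graph_def
  by (metis Pow_iff card.infinite finite_Pow_iff rev_finite_subset subsetI zero_neq_numeral)

lemma matching_props:
  assumes "finite_simple_graph V E" "matching E M k"
  shows "finite M" "\<forall>e\<in>M. finite e \<and> card e = 2 \<and> e \<subseteq> V"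
    "\<forall>e\<in>M. \<forall>f\<in>M. e \<noteq> f \<longrightarrow> e \<inter> f = {}" "card M = k" "M \<subseteq> E"
  using assms fsg_finite[OF assms(1)] unfolding matching_def
  by (auto intro: finite_subset)

lemma gens_props:
  assumes G: "finite_simple_graph V E" and c: "c \<notin> V"
  shows "\<forall>u\<in>matching_gens E k. count u c = 0"
    "\<forall>u\<in>matching_gens E k. count u a \<le> 1"
    "\<forall>u\<in>matching_gens E k. size u = 2 * k"
proof -
  { fix M assume m: "matching E M k"
    note P = matching_props[OF G m]
    have "c \<notin># matching_monomial M" using P c by (subst mm_mem) auto
    then have "count (matching_monomial M) c = 0" by (simp add: count_eq_zero_iff)
    moreover have "count (matching_monomial M) a \<le> 1"
      using P by (intro mm_count_le1) auto
    moreover have "size (matching_monomial M) = 2 * k"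
      using P by (simp add: mm_size)
    ultimately have "count (matching_monomial M) c = 0 \<and> count (matching_monomial M) a \<le> 1
       \<and> size (matching_monomial M) = 2 * k" by simp }
  then show "\<forall>u\<in>matching_gens E k. count u c = 0"
    "\<forall>u\<in>matching_gens E k. count u a \<le> 1"
    "\<forall>u\<in>matching_gens E k. size u = 2 * k"
    unfolding matching_gens_def by auto
qed


lemma disj_insert:
  assumes "\<forall>e\<in>M0. \<forall>f\<in>M0. e \<noteq> f \<longrightarrow> e \<inter> f = {}" "\<forall>e\<in>M0. e \<inter> x = {}"
  shows "\<forall>e\<in>insert x M0. \<forall>f\<in>insert x M0. e \<noteq> f \<longrightarrow> e \<inter> f = {}"
  using assms by (simp add: Int_commute)

lemma gens_prolif:
  assumes G: "finite_simple_graph V E" and leaf: "is_leaf V E a" and ab: "{a, b} \<in> E"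
    and c: "c \<notin> V"
  shows "matching_gens (insert {c, b} E) k =
         matching_gens E k \<union> sg a c ` (matching_gens E k \<inter> {u. a \<in># u})"
proof -
  note P = fsg_finite[OF G]
  have anb: "a \<noteq> b"
  proof
    assume "a = b" then have "card {a, b} = 1" by simp
    with P ab show False by auto
  qed
  have abV: "a \<in> V" "b \<in> V" using P ab by auto
  have can: "c \<noteq> a" "c \<noteq> b" using abV c by auto
  have cE: "\<forall>e\<in>E. c \<notin> e" using P c by blast
  have cbE: "{c, b} \<notin> E" using cE by blast
  have Ea: "\<forall>e\<in>E. a \<in> e \<longrightarrow> e = {a, b}"
  proof -
    have "card {e\<in>E. a \<in> e} = 1" using leaf unfolding is_leaf_def by blast
    then obtain x where x: "{e\<in>E. a \<in> e} = {x}" using card_1_singletonE by blast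
    have "{a, b} \<in> {e\<in>E. a \<in> e}" using ab by blast
    then have "{a, b} \<in> {x}" using x by simp
    then have xab: "x = {a, b}" by simp
    show ?thesis
    proof (intro ballI impI)
      fix e assume "e \<in> E" "a \<in> e"
      then have "e \<in> {e\<in>E. a \<in> e}" by simp
      then show "e = {a, b}" using x xab by simp
    qed
  qed
  have finF: "finite (insert {c, b} E)" using P by blast
  have mset2: "mset_set {x, y} = {#x, y#}" if "x \<noteq> y" for x y :: 'a using that by simp
  show ?thesis
  proof (rule set_eqI, rule iffI)
    fix u assume "u \<in> matching_gens (insert {c, b} E) k"
    then obtain M where M: "matching (insert {c, b} E) M k" "u = matching_monomial M"
      unfolding matching_gens_def by blast
    have finM: "finite M" using M(1) finF unfolding matching_def by (meson rev_finite_subset)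
    show "u \<in> matching_gens E k \<union> sg a c ` (matching_gens E k \<inter> {u. a \<in># u})"
    proof (cases "{c, b} \<in> M")
      case False
      then have "matching E M k" using M(1) unfolding matching_def by blast
      then show ?thesis using M(2) unfolding matching_gens_def by blast
    next
      case True
      define M0 where "M0 = M - {{c, b}}"
      have MM0: "M = insert {c, b} M0" "{c, b} \<notin> M0" using True M0_def by auto
      have M0E: "M0 \<subseteq> E" using M(1) MM0 unfolding matching_def M0_def by blast
      have dis: "\<forall>e\<in>M. \<forall>f\<in>M. e \<noteq> f \<longrightarrow> e \<inter> f = {}" using M(1) unfolding matching_def by blast
      have M0cb: "\<forall>e\<in>M0. e \<inter> {c, b} = {}"
      proof
        fix e assume "e \<in> M0"
        then have "e \<in> M" "e \<noteq> {c, b}" using MM0 by auto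
        then show "e \<inter> {c, b} = {}" using dis[rule_format, OF _ True] by blast
      qed
      have M0a: "\<forall>e\<in>M0. a \<notin> e"
      proof (intro ballI notI)
        fix e assume "e \<in> M0" "a \<in> e"
        then have "e = {a, b}" using M0E Ea by blast
        then show False using M0cb \<open>e \<in> M0\<close> by auto
      qed
      have abM0: "{a, b} \<notin> M0" using M0cb by auto
      have finM0: "finite M0" using finM M0_def by blast
      define M' where "M' = insert {a, b} M0"
      have "card M' = card M" unfolding M'_def using MM0 abM0 finM0 by simp
      then have cM': "card M' = k" using M(1) unfolding matching_def by simp
      have mE: "matching E M' k" unfolding matching_def
      proof (intro conjI)
        show "M' \<subseteq> E" using M0E ab M'_def by blast
        show "card M' = k" by (rule cM')
        show "\<forall>e\<in>M'. \<forall>f\<in>M'. e \<noteq> f \<longrightarrow> e \<inter> f = {}"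
          unfolding M'_def
        proof (rule disj_insert)
          show "\<forall>e\<in>M0. \<forall>f\<in>M0. e \<noteq> f \<longrightarrow> e \<inter> f = {}" using dis MM0 by simp
          show "\<forall>e\<in>M0. e \<inter> {a, b} = {}" using M0cb M0a by auto
        qed
      qed
      have fe: "\<forall>e\<in>M0. finite e" using M0E P by blast
      have mmM: "matching_monomial M = add_mset c (add_mset b (matching_monomial M0))"
        using MM0 finM0 mm_insert[of M0 "{c, b}"] can by simp
      have mmM': "matching_monomial M' = add_mset a (add_mset b (matching_monomial M0))"
        using M'_def abM0 finM0 mm_insert[of M0 "{a, b}"] anb by simp
      have "u = sg a c (matching_monomial M')" using M(2) mmM mmM' unfolding sg_def by simp
      moreover have "a \<in># matching_monomial M'" using mmM' by simp
      ultimately show ?thesis using mE unfolding matching_gens_def by blast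
    qed
  next
    fix u assume u: "u \<in> matching_gens E k \<union> sg a c ` (matching_gens E k \<inter> {u. a \<in># u})"
    show "u \<in> matching_gens (insert {c, b} E) k"
    proof (cases "u \<in> matching_gens E k")
      case True
      then obtain M where "matching E M k" "u = matching_monomial M" unfolding matching_gens_def by blast
      then have "matching (insert {c, b} E) M k" "u = matching_monomial M" unfolding matching_def by blast+
      then show ?thesis unfolding matching_gens_def by blast
    next
      case False
      then obtain v where v: "v \<in> matching_gens E k" "a \<in># v" "u = sg a c v" using u by blast
      then obtain M where M: "matching E M k" "v = matching_monomial M" unfolding matching_gens_def by blast
      note Q = matching_props[OF G M(1)]
      have "a \<in># matching_monomial M" using v(2) M(2) by simp
      then have "\<exists>e\<in>M. a \<in> e" using mm_mem[of M a] Q(1,2) by blast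
      then have abM: "{a, b} \<in> M" using Ea Q(5) by blast
      define M0 where "M0 = M - {{a, b}}"
      have MM0: "M = insert {a, b} M0" "{a, b} \<notin> M0" using abM M0_def by auto
      have finM0: "finite M0" using Q(1) M0_def by blast
      have M0E: "M0 \<subseteq> E" using Q(5) M0_def by blast
      have M0ab: "\<forall>e\<in>M0. e \<inter> {a, b} = {}"
      proof
        fix e assume "e \<in> M0"
        then have "e \<in> M" "e \<noteq> {a, b}" using MM0 by auto
        then show "e \<inter> {a, b} = {}" using Q(3)[rule_format, OF _ abM] by blast
      qed
      have M0c: "\<forall>e\<in>M0. c \<notin> e" using cE M0E by blast
      have cbM0: "{c, b} \<notin> M0" using M0E cbE by blast
      define M' where "M' = insert {c, b} M0"
      have "card M' = card M" unfolding M'_def using MM0 cbM0 finM0 by simp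
      then have cM': "card M' = k" using Q(4) by simp
      have mF: "matching (insert {c, b} E) M' k" unfolding matching_def
      proof (intro conjI)
        show "M' \<subseteq> insert {c, b} E" using M0E M'_def by blast
        show "card M' = k" by (rule cM')
        show "\<forall>e\<in>M'. \<forall>f\<in>M'. e \<noteq> f \<longrightarrow> e \<inter> f = {}"
          unfolding M'_def
        proof (rule disj_insert)
          show "\<forall>e\<in>M0. \<forall>f\<in>M0. e \<noteq> f \<longrightarrow> e \<inter> f = {}" using Q(3) MM0 by simp
          show "\<forall>e\<in>M0. e \<inter> {c, b} = {}" using M0ab M0c by auto
        qed
      qed
      have mmM: "matching_monomial M = add_mset a (add_mset b (matching_monomial M0))"
        using MM0 finM0 mm_insert[of M0 "{a, b}"] anb by simp
      have mmM': "matching_monomial M' = add_mset c (add_mset b (matching_monomial M0))"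
        using M'_def cbM0 finM0 mm_insert[of M0 "{c, b}"] can by simp
      have "u = matching_monomial M'" using v(3) M(2) mmM mmM' unfolding sg_def by simp
      then show ?thesis using mF unfolding matching_gens_def by blast
    qed
  qed
qed


lemma step1:
  assumes G: "finite_simple_graph V E" and leaf: "is_leaf V E a" and ab: "{a, b} \<in> E"
    and c: "c \<notin> V" and H: "has_linear_quotients (matching_gens E k)"
  shows "finite_simple_graph (insert c V) (insert {c, b} E) \<and> is_leaf (insert c V) (insert {c, b} E) a
    \<and> has_linear_quotients (matching_gens (insert {c, b} E) k)"
proof -
  note P = fsg_finite[OF G]
  have abV: "a \<in> V" "b \<in> V" using P ab by auto
  have can: "c \<noteq> a" "c \<noteq> b" using abV c by auto
  have "card {c, b} = 2" using can by simp
  then have "finite_simple_graph (insert c V) (insert {c, b} E)"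
    using G abV unfolding finite_simple_graph_def by blast
  moreover have anb: "a \<noteq> b"
  proof
    assume "a = b" then have "card {a, b} = 1" by simp
    with P ab show False by auto
  qed
  have "{e \<in> insert {c, b} E. a \<in> e} = {e \<in> E. a \<in> e}" using can anb by auto
  then have "is_leaf (insert c V) (insert {c, b} E) a" using leaf unfolding is_leaf_def by simp
  moreover have "has_linear_quotients (matching_gens (insert {c, b} E) k)"
    unfolding gens_prolif[OF G leaf ab c]
    using abstract_main[of a c "matching_gens E k" "2 * k"] gens_props(1)[OF G c, of k] gens_props(2)[OF G c, of k a] gens_props(3)[OF G c, of k] can H by auto
  ultimately show ?thesis by blast
qed

lemma stepN:
  assumes "finite N"
  shows "finite_simple_graph V E \<Longrightarrow> is_leaf V E a \<Longrightarrow> {a, b} \<in> E \<Longrightarrow> N \<inter> V = {} \<Longrightarrow>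
    has_linear_quotients (matching_gens E k) \<Longrightarrow>
    finite_simple_graph (V \<union> N) (E \<union> {{x, b} | x. x \<in> N}) \<and>
    is_leaf (V \<union> N) (E \<union> {{x, b} | x. x \<in> N}) a \<and>
    has_linear_quotients (matching_gens (E \<union> {{x, b} | x. x \<in> N}) k)"
  using assms
proof (induction N rule: finite_induct)
  case empty
  then show ?case by simp
next
  case (insert x N)
  have IH: "finite_simple_graph (V \<union> N) (E \<union> {{x, b} | x. x \<in> N}) \<and>
    is_leaf (V \<union> N) (E \<union> {{x, b} | x. x \<in> N}) a \<and>
    has_linear_quotients (matching_gens (E \<union> {{x, b} | x. x \<in> N}) k)"
    using insert by blast
  have xn: "x \<notin> V \<union> N" using insert by blast
  have ab: "{a, b} \<in> E \<union> {{x, b} | x. x \<in> N}" using insert by blast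
  have eqV: "insert x (V \<union> N) = V \<union> insert x N" by blast
  have eqE: "insert {x, b} (E \<union> {{x, b} | x. x \<in> N}) = E \<union> {{y, b} | y. y \<in> insert x N}" by blast
  show ?case using step1[OF conjunct1[OF IH] conjunct1[OF conjunct2[OF IH]] ab xn conjunct2[OF conjunct2[OF IH]]]
    unfolding eqV eqE by blast
qed


lemma reach:
  assumes G: "finite_simple_graph V E" and H0: "has_linear_quotients (matching_gens E k)"
  shows "proliferate_step\<^sup>*\<^sup>* (V, E) Hh \<Longrightarrow>
    finite_simple_graph (fst Hh) (snd Hh) \<and> has_linear_quotients (matching_gens (snd Hh) k)"
proof (induction rule: rtranclp_induct)
  case base
  then show ?case using G H0 by simp
next
  case (step y z)
  from step.hyps(2) obtain a b N where
    s: "is_leaf (fst y) (snd y) a" "{a, b} \<in> snd y" "finite N" "N \<inter> fst y = {}"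
       "z = (fst y \<union> N, snd y \<union> {{x, b} | x. x \<in> N})"
    unfolding proliferate_step_def by blast
  show ?case using stepN[OF s(3), of "fst y" "snd y" a b k] step.IH s by simp
qed

theorem corollary5p2:
  fixes V W :: "'a set" and E F :: "'a set set" and k :: nat
  assumes "finite_simple_graph V E"
    and "obtained_by_proliferating (V, E) (W, F)"
    and "has_linear_quotients (matching_gens E k)"
  shows "has_linear_quotients (matching_gens F k)"
  using reach[OF assms(1) assms(3), of "(W, F)"] assms(2)
  unfolding obtained_by_proliferating_def by simp

end
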